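(* For every weak composition $a$, $\mathfrak{L}_a=\sum_{T\in\mathfrak{L}\mathrm{SSF}(a)}x^{\mathrm{wt}(T)}$.
   Context: Weak composition of length $n$: sequence of $n$ nonnegative integers. A local move replaces consecutive entries $(0,k)$ at positions $p,p+1$ by $(i,j)$, $i+j=k$, $i,j\ge0$; a fixed slide of $a$ is obtained from $a$ by a (possibly empty) sequence of such moves with $j>0$ required whenever $a_{p+1}\ne0$; $\mathfrak{L}_a=\sum x^b$ over the set of fixed slides $b$ of $a$. $D(a)$: $a_i$ left-justified boxes in row $i$, row 1 lowest; for a filling $T$, $\mathrm{wt}(T)_i$ is the number of entries $i$. Triples (rows $r<s$): Type A: $\gamma=(r,c),\alpha=(r,c+1),\beta=(s,c+1)$, $a_r\ge a_s$; Type B: $\gamma=(s,c),\alpha=(s,c+1),\beta=(r,c)$, $a_s>a_r$; inversion triple: $\beta>\gamma\ge\alpha$ or $\gamma\ge\alpha>\beta$. A semi-skyline filling: positive integer entries, rows weakly decreasing left to right, distinct column entries, all triples inversion triples. $\mathfrak{L}\mathrm{SSF}(a)$: semi-skyline fillings of $D(a)$ whose first-column entry in each nonempty row $i$ equals $i$ and such that whenever box $B$ is in a higher row than box $B'$, the entry of $B$ is strictly larger than that of $B'$. *)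

theory Defs
  imports "HOL-Library.Poly_Mapping"
begin

text \<open>Weak compositions are lists of naturals; list position p (0-based) is entry a_(p+1).
  Monomials x^b are finitely supported exponent maps nat =>0 nat (variable x_i has index i, i >= 1);
  polynomials are elements of (nat =>0 nat) =>0 int.\<close>

definition mono :: "nat list \<Rightarrow> (nat \<Rightarrow>\<^sub>0 nat)" where
  "mono b = (\<Sum>p<length b. Poly_Mapping.single (Suc p) (b ! p))"

definition slide_step :: "nat list \<Rightarrow> nat list \<Rightarrow> nat list \<Rightarrow> bool" where
  "slide_step a b b' \<longleftrightarrow>
     (\<exists>p i j. Suc p < length b \<and> b ! p = 0 \<and> i + j = b ! Suc p \<and>
        (a ! Suc p \<noteq> 0 \<longrightarrow> j > 0) \<and>
        b' = b[p := i, Suc p := j])"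

definition fixed_slides :: "nat list \<Rightarrow> nat list set" where
  "fixed_slides a = {b. (slide_step a)\<^sup>*\<^sup>* a b}"

definition frakL :: "nat list \<Rightarrow> ((nat \<Rightarrow>\<^sub>0 nat) \<Rightarrow>\<^sub>0 int)" where
  "frakL a = (\<Sum>b\<in>fixed_slides a. Poly_Mapping.single (mono b) 1)"

text \<open>Diagram D(a): boxes (row, column), both 1-based, row 1 lowest.\<close>
definition diag :: "nat list \<Rightarrow> (nat \<times> nat) set" where
  "diag a = {(r, c). 1 \<le> r \<and> r \<le> length a \<and> 1 \<le> c \<and> c \<le> a ! (r - 1)}"

definition row_len :: "nat list \<Rightarrow> nat \<Rightarrow> nat" where
  "row_len a r = a ! (r - 1)"

definition inversion_triple :: "nat \<Rightarrow> nat \<Rightarrow> nat \<Rightarrow> bool" where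
  "inversion_triple g al be \<longleftrightarrow> (be > g \<and> g \<ge> al) \<or> (g \<ge> al \<and> al > be)"

definition semi_skyline :: "nat list \<Rightarrow> (nat \<times> nat \<Rightarrow> nat) \<Rightarrow> bool" where
  "semi_skyline a T \<longleftrightarrow>
     (\<forall>B\<in>diag a. T B > 0) \<and>
     (\<forall>r c. (r, c) \<in> diag a \<and> (r, Suc c) \<in> diag a \<longrightarrow> T (r, c) \<ge> T (r, Suc c)) \<and>
     (\<forall>r s c. (r, c) \<in> diag a \<and> (s, c) \<in> diag a \<and> r \<noteq> s \<longrightarrow> T (r, c) \<noteq> T (s, c)) \<and>
     (\<forall>r s c. r < s \<and> row_len a r \<ge> row_len a s \<and>
        (r, c) \<in> diag a \<and> (r, Suc c) \<in> diag a \<and> (s, Suc c) \<in> diag a \<longrightarrow>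
        inversion_triple (T (r, c)) (T (r, Suc c)) (T (s, Suc c))) \<and>
     (\<forall>r s c. r < s \<and> row_len a s > row_len a r \<and>
        (s, c) \<in> diag a \<and> (s, Suc c) \<in> diag a \<and> (r, c) \<in> diag a \<longrightarrow>
        inversion_triple (T (s, c)) (T (s, Suc c)) (T (r, c)))"

definition LSSF :: "nat list \<Rightarrow> (nat \<times> nat \<Rightarrow> nat) set" where
  "LSSF a = {T. (\<forall>B. B \<notin> diag a \<longrightarrow> T B = 0) \<and> semi_skyline a T \<and>
     (\<forall>r. (r, 1) \<in> diag a \<longrightarrow> T (r, 1) = r) \<and>
     (\<forall>r c s d. (r, c) \<in> diag a \<and> (s, d) \<in> diag a \<and> r > s \<longrightarrow> T (r, c) > T (s, d))}"

definition wt :: "nat list \<Rightarrow> (nat \<times> nat \<Rightarrow> nat) \<Rightarrow> (nat \<Rightarrow>\<^sub>0 nat)" where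
  "wt a T = (\<Sum>B\<in>diag a. Poly_Mapping.single (T B) 1)"

end

theory Submission imports Defs begin

definition P :: "nat list \<Rightarrow> nat \<Rightarrow> nat" where
  "P b q = (\<Sum>x<q. b ! x)"

lemma P_0[simp]: "P b 0 = 0" by (simp add: P_def)
lemma P_Suc: "P b (Suc q) = P b q + b ! q" by (simp add: P_def)
lemma P_mono: "i \<le> j \<Longrightarrow> P b i \<le> P b j"
  unfolding P_def by (rule sum_mono2) auto

definition S :: "nat list \<Rightarrow> nat list set" where
  "S a = {b. length b = length a \<and> P b (length a) = P a (length a) \<and>
     (\<forall>q<length a. a ! q \<noteq> 0 \<longrightarrow> 1 \<le> b ! q \<and> P b (Suc q) = P a (Suc q))}"

lemma P_two:
  assumes "Suc p < length b" "length b' = length b"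
    "\<forall>x<length b. x \<noteq> p \<and> x \<noteq> Suc p \<longrightarrow> b' ! x = b ! x"
    "b' ! p + b' ! Suc p = b ! p + b ! Suc p" "q \<le> length b" "q \<noteq> Suc p"
  shows "P b' q = P b q"
proof (cases "q \<le> p")
  case True
  then show ?thesis unfolding P_def using assms by (intro sum.cong) auto
next
  case False
  define k where "k = q - Suc (Suc p)"
  have k: "q = Suc (Suc p) + k" using False assms(6) unfolding k_def by simp
  have "Suc (Suc p) + k \<le> length b \<longrightarrow> P b' (Suc (Suc p) + k) = P b (Suc (Suc p) + k)"
  proof (induction k)
    case 0
    have "P b' p = P b p" unfolding P_def using assms by (intro sum.cong) auto
    then show ?case using assms(4) by (simp add: P_Suc)
  next
    case (Suc k)
    then show ?case using assms(3) by (simp add: P_Suc)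
  qed
  then show ?thesis using k assms(5) by simp
qed

lemma sum_one_point:
  assumes "finite A" "x \<in> A" "\<forall>y\<in>A. y \<noteq> x \<longrightarrow> f y = g y"
  shows "sum g A + f x = sum f A + (g x :: nat)"
proof -
  have "sum f A = f x + sum f (A - {x})" using assms by (simp add: sum.remove)
  moreover have "sum g A = g x + sum g (A - {x})" using assms by (simp add: sum.remove)
  moreover have "sum f (A - {x}) = sum g (A - {x})" using assms by (intro sum.cong) auto
  ultimately show ?thesis by simp
qed

lemma step_pres:
  assumes b: "b \<in> S a" and st: "slide_step a b b'"
  shows "b' \<in> S a"
proof -
  from st obtain p i j where p: "Suc p < length b" "b ! p = 0" "i + j = b ! Suc p"
    "a ! Suc p \<noteq> 0 \<longrightarrow> j > 0" "b' = b[p := i, Suc p := j]"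
    unfolding slide_step_def by blast
  have len: "length b = length a" using b by (simp add: S_def)
  have ap: "a ! p = 0"
  proof (rule ccontr)
    assume "a ! p \<noteq> 0"
    then have "1 \<le> b ! p" using b p(1) len unfolding S_def by simp
    then show False using p(2) by simp
  qed
  have lb': "length b' = length b" using p by simp
  have nth: "\<forall>x<length b. x \<noteq> p \<and> x \<noteq> Suc p \<longrightarrow> b' ! x = b ! x" using p by simp
  have sm: "b' ! p + b' ! Suc p = b ! p + b ! Suc p" using p by simp
  have Pq: "P b' q = P b q" if "q \<le> length b" "q \<noteq> Suc p" for q
    using P_two[OF p(1) lb' nth sm that] .
  show ?thesis unfolding S_def
  proof (intro CollectI conjI allI impI)
    show "length b' = length a" using lb' len by simp
    show "P b' (length a) = P a (length a)" using Pq[of "length a"] len p(1) b by (simp add: S_def)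
    fix q assume q: "q < length a" "a ! q \<noteq> 0"
    then have "q \<noteq> p" using ap by auto
    show "1 \<le> b' ! q"
    proof (cases "q = Suc p")
      case True then show ?thesis using p q by auto
    next
      case False then show ?thesis using nth \<open>q \<noteq> p\<close> q b len by (auto simp: S_def)
    qed
    show "P b' (Suc q) = P a (Suc q)" using Pq[of "Suc q"] \<open>q \<noteq> p\<close> q b len by (auto simp: S_def)
  qed
qed

lemma a_in_S: "a \<in> S a" by (auto simp: S_def)

lemma fs_sub: "fixed_slides a \<subseteq> S a"
proof
  fix b assume "b \<in> fixed_slides a"
  then have "(slide_step a)\<^sup>*\<^sup>* a b" by (simp add: fixed_slides_def)
  then show "b \<in> S a"
    by (induction rule: rtranclp_induct) (auto intro: a_in_S step_pres)
qed

lemma S_ge: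
  assumes "b \<in> S a" "q \<le> length a" shows "P a q \<le> P b q"
  using assms(2)
proof (induction q)
  case 0 then show ?case by simp
next
  case (Suc q)
  show ?case
  proof (cases "a ! q = 0")
    case True
    then show ?thesis using Suc by (simp add: P_Suc)
  next
    case False
    then show ?thesis using assms(1) Suc(2) by (auto simp: S_def)
  qed
qed

lemma S_claim:
  assumes b: "b \<in> S a" and ne: "b \<noteq> a"
  shows "\<exists>p. Suc p < length a \<and> a ! p = 0 \<and> b ! p > 0 \<and> (a ! Suc p \<noteq> 0 \<longrightarrow> b ! Suc p > 0)"
proof -
  have len: "length b = length a" using b by (simp add: S_def)
  have "\<exists>q<length a. a ! q = 0 \<and> b ! q > 0"
  proof (rule ccontr)
    assume H: "\<not> ?thesis"
    have eq: "q \<le> length a \<Longrightarrow> P b q = P a q" for q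
    proof (induction q)
      case 0 then show ?case by simp
    next
      case (Suc q)
      show ?case
      proof (cases "a ! q = 0")
        case True
        have "b ! q = 0" using H True Suc(2) by (auto simp: Suc_le_eq)
        then show ?thesis using Suc True by (simp add: P_Suc)
      next
        case False
        then show ?thesis using b Suc(2) by (auto simp: S_def)
      qed
    qed
    have "b ! q = a ! q" if "q < length a" for q
      using eq[of q] eq[of "Suc q"] that by (simp add: P_Suc)
    then have "b = a" using len by (simp add: nth_equalityI)
    then show False using ne by simp
  qed
  then obtain q where q: "q < length a" "a ! q = 0" "b ! q > 0" by blast
  have "Suc q < length a"
  proof (rule ccontr)
    assume "\<not> Suc q < length a"
    then have n: "length a = Suc q" using q by simp
    have "P b (Suc q) = P b q + b ! q" by (simp add: P_Suc)
    moreover have "P a (Suc q) = P a q" using q by (simp add: P_Suc)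
    moreover have "P a q \<le> P b q" using S_ge[OF b] q by simp
    moreover have "P b (Suc q) = P a (Suc q)" using b n by (simp add: S_def)
    ultimately show False using q by simp
  qed
  moreover have "a ! Suc q \<noteq> 0 \<longrightarrow> b ! Suc q > 0" using b \<open>Suc q < length a\<close> by (auto simp: S_def)
  ultimately show ?thesis using q by blast
qed

definition M :: "nat list \<Rightarrow> nat" where
  "M b = (\<Sum>q\<in>{..length b}. P b q)"

lemma S_sub_fs_aux:
  "\<forall>b. M b = m \<longrightarrow> b \<in> S a \<longrightarrow> (slide_step a)\<^sup>*\<^sup>* a b"
proof (induction m rule: less_induct)
  case (less m)
  show ?case
  proof (intro allI impI)
    fix b assume Mb: "M b = m" and b: "b \<in> S a"
    show "(slide_step a)\<^sup>*\<^sup>* a b"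
    proof (cases "b = a")
      case True then show ?thesis by simp
    next
      case False
      from S_claim[OF b False] obtain p where p: "Suc p < length a" "a ! p = 0" "b ! p > 0"
        "a ! Suc p \<noteq> 0 \<longrightarrow> b ! Suc p > 0" by blast
      have len: "length b = length a" using b by (simp add: S_def)
      define b' where "b' = b[p := 0, Suc p := b ! p + b ! Suc p]"
      have lb': "length b' = length b" by (simp add: b'_def)
      have nth: "\<forall>x<length b. x \<noteq> p \<and> x \<noteq> Suc p \<longrightarrow> b' ! x = b ! x" by (simp add: b'_def)
      have b'p: "b' ! p = 0" "b' ! Suc p = b ! p + b ! Suc p" using p len by (auto simp: b'_def)
      have sm: "b' ! p + b' ! Suc p = b ! p + b ! Suc p" using b'p by simp
      have Pq: "P b' q = P b q" if "q \<le> length b" "q \<noteq> Suc p" for q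
        using P_two[OF _ lb' nth sm that] p len by simp
      have b'S: "b' \<in> S a" unfolding S_def
      proof (intro CollectI conjI allI impI)
        show "length b' = length a" using lb' len by simp
        show "P b' (length a) = P a (length a)" using Pq[of "length a"] len p(1) b by (simp add: S_def)
        fix q assume q: "q < length a" "a ! q \<noteq> 0"
        then have "q \<noteq> p" using p by auto
        show "1 \<le> b' ! q"
        proof (cases "q = Suc p")
          case True then show ?thesis using b'p p q by auto
        next
          case False then show ?thesis using nth \<open>q \<noteq> p\<close> q b len by (auto simp: S_def)
        qed
        show "P b' (Suc q) = P a (Suc q)" using Pq[of "Suc q"] \<open>q \<noteq> p\<close> q b len by (auto simp: S_def)
      qed
      have "M b' + P b (Suc p) = M b + P b' (Suc p)"
        unfolding M_def lb'
        by (rule sum_one_point) (use Pq p len in auto)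
      moreover have "P b' (Suc p) = P b p" using b'p Pq[of p] len p by (simp add: P_Suc)
      moreover have "P b (Suc p) = P b p + b ! p" by (simp add: P_Suc)
      ultimately have "M b' < M b" using p by simp
      then have r: "(slide_step a)\<^sup>*\<^sup>* a b'" using less Mb b'S by blast
      have "b'[p := b ! p, Suc p := b ! Suc p] = b"
        by (rule nth_equalityI) (use p len in \<open>auto simp: b'_def nth_list_update\<close>)
      moreover have "Suc p < length b'" using p len lb' by simp
      ultimately have "slide_step a b' b" unfolding slide_step_def
        apply -
        apply (rule exI[where x=p])
        apply (rule exI[where x="b ! p"])
        apply (rule exI[where x="b ! Suc p"])
        using p b'p by simp
      then show ?thesis using r by simp
    qed
  qed
qed

lemma fs_eq_S: "fixed_slides a = S a"
  using fs_sub S_sub_fs_aux unfolding fixed_slides_def by blast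


lemma diag_iff: "(r, c) \<in> diag a \<longleftrightarrow> 1 \<le> r \<and> r \<le> length a \<and> 1 \<le> c \<and> c \<le> a ! (r - 1)"
  by (simp add: diag_def)

definition sig :: "nat list \<Rightarrow> nat \<times> nat \<Rightarrow> nat" where
  "sig a B = P a (fst B) - snd B"

lemma P_row: "1 \<le> r \<Longrightarrow> P a r = P a (r - 1) + a ! (r - 1)"
  using P_Suc[of a "r - 1"] by simp

lemma sig_int:
  assumes "(r, c) \<in> diag a"
  shows "P a (r - 1) \<le> sig a (r, c) \<and> sig a (r, c) < P a r"
  using assms P_row[of r a] by (auto simp: diag_iff sig_def)

lemma sig_ord:
  assumes s: "(s, d) \<in> diag a" and r: "(r, c) \<in> diag a"
  shows "sig a (s, d) < sig a (r, c) \<longleftrightarrow> (s < r \<or> (s = r \<and> c < d))"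
proof -
  have lt: "sig a (x, y) < sig a (z, w)" if "(x, y) \<in> diag a" "(z, w) \<in> diag a" "x < z" for x y z w
  proof -
    have "sig a (x, y) < P a x" using sig_int[OF that(1)] by simp
    also have "P a x \<le> P a (z - 1)" using that(3) by (intro P_mono) simp
    also have "P a (z - 1) \<le> sig a (z, w)" using sig_int[OF that(2)] by simp
    finally show ?thesis .
  qed
  show ?thesis
  proof (cases s r rule: linorder_cases)
    case less then show ?thesis using lt[OF s r] by simp
  next
    case greater then show ?thesis using lt[OF r s] by simp
  next
    case equal
    then show ?thesis using s r P_row[of r a] by (auto simp: diag_iff sig_def) arith
  qed
qed

lemma sig_inj: "inj_on (sig a) (diag a)"
proof (rule inj_onI)
  fix B B' assume B: "B \<in> diag a" "B' \<in> diag a" "sig a B = sig a B'"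
  obtain s d where sd: "B = (s, d)" by (cases B)
  obtain r c where rc: "B' = (r, c)" by (cases B')
  have "\<not> (s < r \<or> s = r \<and> c < d)" using sig_ord[of s d a r c] B sd rc by simp
  moreover have "\<not> (r < s \<or> r = s \<and> d < c)" using sig_ord[of r c a s d] B sd rc by simp
  ultimately show "B = B'" using sd rc by auto
qed

lemma sig_bij: "bij_betw (sig a) (diag a) {..<P a (length a)}"
  unfolding bij_betw_def
proof (intro conjI sig_inj subset_antisym)
  show "sig a ` diag a \<subseteq> {..<P a (length a)}"
  proof
    fix x assume "x \<in> sig a ` diag a"
    then obtain r c where rc: "(r, c) \<in> diag a" "x = sig a (r, c)" by auto
    have "P a r \<le> P a (length a)" using rc by (intro P_mono) (simp add: diag_iff)
    then show "x \<in> {..<P a (length a)}" using sig_int[OF rc(1)] rc by simp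
  qed
  show "{..<P a (length a)} \<subseteq> sig a ` diag a"
  proof
    fix x assume "x \<in> {..<P a (length a)}"
    then have x: "x < P a (length a)" by simp
    define r where "r = (LEAST r. x < P a r)"
    have r1: "x < P a r" unfolding r_def using x by (rule LeastI)
    have r2: "r \<le> length a" unfolding r_def using x by (rule Least_le)
    have r0: "r \<ge> 1" using r1 by (cases r) auto
    have "r - 1 < (LEAST r. x < P a r)" using r0 r_def by simp
    then have r3: "\<not> x < P a (r - 1)" by (rule not_less_Least)
    have "P a r = P a (r - 1) + a ! (r - 1)" using P_row[OF r0] .
    then have "(r, P a r - x) \<in> diag a" using r0 r1 r2 r3 by (auto simp: diag_iff)
    moreover have "sig a (r, P a r - x) = x" using r1 by (simp add: sig_def)
    ultimately show "x \<in> sig a ` diag a" by (metis image_eqI)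
  qed
qed

lemma finite_diag: "finite (diag a)"
  using sig_bij bij_betw_finite by blast

lemma card_diag: "card (diag a) = P a (length a)"
  using bij_betw_same_card[OF sig_bij] by simp

lemma card_sig_lt: "card {B \<in> diag a. sig a B < k} = min k (P a (length a))"
proof -
  have im: "sig a ` diag a = {..<P a (length a)}" using sig_bij[of a] by (simp add: bij_betw_def)
  have "sig a ` {B \<in> diag a. sig a B < k} = {x \<in> {..<P a (length a)}. x < k}"
  proof (intro subset_antisym subsetI)
    fix x assume "x \<in> {x \<in> {..<P a (length a)}. x < k}"
    then have "x \<in> sig a ` diag a" "x < k" using im by auto
    then show "x \<in> sig a ` {B \<in> diag a. sig a B < k}" by auto
  qed (use im in auto)
  then have "bij_betw (sig a) {B \<in> diag a. sig a B < k} {x \<in> {..<P a (length a)}. x < k}"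
    by (intro bij_betw_subset[OF sig_bij]) auto
  then have "card {B \<in> diag a. sig a B < k} = card {x \<in> {..<P a (length a)}. x < k}"
    by (rule bij_betw_same_card)
  also have "{x \<in> {..<P a (length a)}. x < k} = {..<min k (P a (length a))}" by auto
  finally show ?thesis by simp
qed


definition cnt :: "nat list \<Rightarrow> (nat \<times> nat \<Rightarrow> nat) \<Rightarrow> nat \<Rightarrow> nat" where
  "cnt a T v = card {B \<in> diag a. T B \<le> v}"

definition hh :: "nat list \<Rightarrow> (nat \<times> nat \<Rightarrow> nat) \<Rightarrow> nat list" where
  "hh a T = map (\<lambda>p. card {B \<in> diag a. T B = Suc p}) [0..<length a]"

lemma cnt_Suc: "cnt a T (Suc q) = cnt a T q + card {B \<in> diag a. T B = Suc q}"
proof -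
  have "{B \<in> diag a. T B \<le> Suc q} = {B \<in> diag a. T B \<le> q} \<union> {B \<in> diag a. T B = Suc q}" by auto
  then show ?thesis unfolding cnt_def using finite_diag[of a]
    by (simp add: card_Un_disjoint disjoint_iff)
qed

lemma P_hh:
  assumes pos: "\<forall>B\<in>diag a. T B > 0" and q: "q \<le> length a"
  shows "P (hh a T) q = cnt a T q"
  using q
proof (induction q)
  case 0
  have e: "{B \<in> diag a. T B = 0} = {}" using pos by auto
  show ?case by (simp only: cnt_def P_0 le_zero_eq e card.empty)
next
  case (Suc q)
  then show ?case by (simp add: P_Suc cnt_Suc hh_def)
qed

lemma LSSF_D:
  assumes "T \<in> LSSF a"
  shows "\<forall>B. B \<notin> diag a \<longrightarrow> T B = 0"
    and "\<forall>B\<in>diag a. T B > 0"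
    and "\<And>r c. (r, c) \<in> diag a \<Longrightarrow> (r, Suc c) \<in> diag a \<Longrightarrow> T (r, Suc c) \<le> T (r, c)"
    and "\<And>r. (r, 1) \<in> diag a \<Longrightarrow> T (r, 1) = r"
    and "\<And>r c s d. (r, c) \<in> diag a \<Longrightarrow> (s, d) \<in> diag a \<Longrightarrow> s < r \<Longrightarrow> T (s, d) < T (r, c)"
  using assms by (auto simp: LSSF_def semi_skyline_def)

lemma LSSF_rowmono:
  assumes T: "T \<in> LSSF a" and d: "(r, d) \<in> diag a" and c: "1 \<le> c" "c \<le> d"
  shows "T (r, d) \<le> T (r, c)"
proof -
  have "\<forall>k. c + k \<le> d \<longrightarrow> T (r, c + k) \<le> T (r, c)"
  proof (intro allI)
    fix k show "c + k \<le> d \<longrightarrow> T (r, c + k) \<le> T (r, c)"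
    proof (induction k)
      case 0 then show ?case by simp
    next
      case (Suc k)
      show ?case
      proof
        assume h: "c + Suc k \<le> d"
        have "(r, c + k) \<in> diag a" "(r, Suc (c + k)) \<in> diag a" using d c h by (auto simp: diag_iff)
        then have "T (r, Suc (c + k)) \<le> T (r, c + k)" using LSSF_D(3)[OF T] by blast
        then show "T (r, c + Suc k) \<le> T (r, c)" using Suc h by simp
      qed
    qed
  qed
  then have "c + (d - c) \<le> d \<longrightarrow> T (r, c + (d - c)) \<le> T (r, c)" by (rule spec)
  then have "T (r, c + (d - c)) \<le> T (r, c)" using c by simp
  moreover have "c + (d - c) = d" using c by simp
  ultimately show ?thesis by simp
qed

lemma LSSF_le_row:
  assumes T: "T \<in> LSSF a" and rc: "(r, c) \<in> diag a"
  shows "T (r, c) \<le> r"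
proof -
  have r1: "(r, 1) \<in> diag a" using rc by (auto simp: diag_iff)
  have "T (r, c) \<le> T (r, 1)" using LSSF_rowmono[OF T rc] rc by (auto simp: diag_iff)
  then show ?thesis using LSSF_D(4)[OF T r1] by simp
qed

lemma LSSF_char:
  assumes T: "T \<in> LSSF a" and rc: "(r, c) \<in> diag a"
  shows "T (r, c) \<le> v \<longleftrightarrow> sig a (r, c) < cnt a T v"
proof
  assume le: "T (r, c) \<le> v"
  have sub: "{B \<in> diag a. sig a B < Suc (sig a (r, c))} \<subseteq> {B \<in> diag a. T B \<le> v}"
  proof
    fix B assume B: "B \<in> {B \<in> diag a. sig a B < Suc (sig a (r, c))}"
    obtain s d where sd: "B = (s, d)" by (cases B)
    have Bd: "(s, d) \<in> diag a" using B sd by simp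
    have "\<not> sig a (r, c) < sig a (s, d)" using B sd by simp
    then have "s < r \<or> (s = r \<and> c \<le> d)" using sig_ord[OF rc Bd] by auto
    then have "T (s, d) \<le> T (r, c)"
    proof
      assume "s < r" then show ?thesis using LSSF_D(5)[OF T rc Bd] by simp
    next
      assume "s = r \<and> c \<le> d" then show ?thesis using LSSF_rowmono[OF T] Bd rc by (auto simp: diag_iff)
    qed
    then show "B \<in> {B \<in> diag a. T B \<le> v}" using le Bd sd by simp
  qed
  have "card {B \<in> diag a. sig a B < Suc (sig a (r, c))} = Suc (sig a (r, c))"
  proof -
    have "sig a (r, c) < P a (length a)"
      using sig_int[OF rc] P_mono[of r "length a" a] rc by (auto simp: diag_iff)
    then show ?thesis using card_sig_lt[of a "Suc (sig a (r, c))"] by simp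
  qed
  moreover have "card {B \<in> diag a. sig a B < Suc (sig a (r, c))} \<le> card {B \<in> diag a. T B \<le> v}"
    using sub by (intro card_mono) (simp_all add: finite_diag)
  ultimately have "Suc (sig a (r, c)) \<le> cnt a T v" unfolding cnt_def by simp
  then show "sig a (r, c) < cnt a T v" by simp
next
  assume lt: "sig a (r, c) < cnt a T v"
  show "T (r, c) \<le> v"
  proof (rule ccontr)
    assume "\<not> T (r, c) \<le> v"
    then have gt: "v < T (r, c)" by simp
    have sub: "{B \<in> diag a. T B \<le> v} \<subseteq> {B \<in> diag a. sig a B < sig a (r, c)}"
    proof
      fix B assume B: "B \<in> {B \<in> diag a. T B \<le> v}"
      obtain s d where sd: "B = (s, d)" by (cases B)
      have Bd: "(s, d) \<in> diag a" using B sd by simp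
      have Tl: "T (s, d) < T (r, c)" using B sd gt by simp
      have "\<not> r < s" using LSSF_D(5)[OF T Bd rc] Tl by auto
      moreover have "\<not> (s = r \<and> d \<le> c)" using LSSF_rowmono[OF T rc, of d] Bd Tl by (auto simp: diag_iff)
      ultimately have "s < r \<or> (s = r \<and> c < d)" by auto
      then show "B \<in> {B \<in> diag a. sig a B < sig a (r, c)}" using sig_ord[OF Bd rc] Bd sd by simp
    qed
    have "card {B \<in> diag a. sig a B < sig a (r, c)} = sig a (r, c)"
    proof -
      have "sig a (r, c) < P a (length a)"
        using sig_int[OF rc] P_mono[of r "length a" a] rc by (auto simp: diag_iff)
      then show ?thesis using card_sig_lt[of a "sig a (r, c)"] by simp
    qed
    moreover have "card {B \<in> diag a. T B \<le> v} \<le> card {B \<in> diag a. sig a B < sig a (r, c)}"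
      using sub by (intro card_mono) (simp_all add: finite_diag)
    ultimately have "cnt a T v \<le> sig a (r, c)" unfolding cnt_def by simp
    then show False using lt by simp
  qed
qed


lemma LSSF_le_n:
  assumes T: "T \<in> LSSF a" and B: "B \<in> diag a"
  shows "T B \<le> length a"
proof -
  obtain r c where rc: "B = (r, c)" by (cases B)
  show ?thesis using LSSF_le_row[OF T, of r c] B rc by (auto simp: diag_iff)
qed

lemma hh_in_S:
  assumes T: "T \<in> LSSF a"
  shows "hh a T \<in> S a"
proof -
  note pos = LSSF_D(2)[OF T]
  have len: "length (hh a T) = length a" by (simp add: hh_def)
  have "{B \<in> diag a. T B \<le> length a} = diag a" using LSSF_le_n[OF T] by auto
  then have tot: "P (hh a T) (length a) = P a (length a)"
    using P_hh[OF pos, of "length a"] card_diag[of a] by (simp add: cnt_def)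
  show ?thesis unfolding S_def
  proof (intro CollectI conjI allI impI len tot)
    fix q assume q: "q < length a" "a ! q \<noteq> 0"
    have r1: "(Suc q, 1) \<in> diag a" using q by (auto simp: diag_iff)
    have T1: "T (Suc q, 1) = Suc q" using LSSF_D(4)[OF T r1] .
    have "(Suc q, 1) \<in> {B \<in> diag a. T B = Suc q}" using r1 T1 by simp
    then have "card {B \<in> diag a. T B = Suc q} > 0"
      using finite_diag[of a] by (auto simp: card_gt_0_iff)
    then show "1 \<le> hh a T ! q" using q by (simp add: hh_def)
    have Pa1: "P a (Suc q) \<ge> 1" using q by (simp add: P_Suc)
    have sig1: "sig a (Suc q, 1) = P a (Suc q) - 1" by (simp add: sig_def)
    have "{B \<in> diag a. T B \<le> Suc q} = {B \<in> diag a. sig a B < P a (Suc q)}"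
    proof (intro Collect_cong conj_cong refl)
      fix B assume B: "B \<in> diag a"
      obtain s d where sd: "B = (s, d)" by (cases B)
      have Bd: "(s, d) \<in> diag a" using B sd by simp
      have e1: "T (s, d) \<le> Suc q \<longleftrightarrow> s \<le> Suc q"
      proof
        assume h: "T (s, d) \<le> Suc q"
        show "s \<le> Suc q"
        proof (rule ccontr)
          assume "\<not> s \<le> Suc q"
          then have "T (Suc q, 1) < T (s, d)" using LSSF_D(5)[OF T Bd r1] by simp
          then show False using h T1 by simp
        qed
      next
        assume "s \<le> Suc q"
        then show "T (s, d) \<le> Suc q" using LSSF_le_row[OF T Bd] by simp
      qed
      have e2: "sig a (s, d) < P a (Suc q) \<longleftrightarrow> \<not> sig a (Suc q, 1) < sig a (s, d)"
        using sig1 Pa1 by auto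
      have e3: "\<not> sig a (Suc q, 1) < sig a (s, d) \<longleftrightarrow> s \<le> Suc q"
        using sig_ord[OF r1 Bd] Bd by (auto simp: diag_iff)
      show "(T B \<le> Suc q) = (sig a B < P a (Suc q))" using e1 e2 e3 sd by simp
    qed
    then have "cnt a T (Suc q) = P a (Suc q)"
      using card_sig_lt[of a "P a (Suc q)"] P_mono[of "Suc q" "length a" a] q
      by (simp add: cnt_def)
    then show "P (hh a T) (Suc q) = P a (Suc q)" using P_hh[OF pos, of "Suc q"] q by simp
  qed
qed

lemma hh_inj: "inj_on (hh a) (LSSF a)"
proof (rule inj_onI)
  fix T T' assume T: "T \<in> LSSF a" and T': "T' \<in> LSSF a" and h: "hh a T = hh a T'"
  have c: "cnt a T v = cnt a T' v" if "v \<le> length a" for v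
    using P_hh[OF LSSF_D(2)[OF T] that] P_hh[OF LSSF_D(2)[OF T'] that] h by simp
  have le: "X B \<le> Y B" if X: "X \<in> LSSF a" and Y: "Y \<in> LSSF a" and B: "B \<in> diag a"
    and cc: "\<And>v. v \<le> length a \<Longrightarrow> cnt a X v = cnt a Y v" for X Y B
  proof -
    obtain r c where rc: "B = (r, c)" by (cases B)
    have Bd: "(r, c) \<in> diag a" using B rc by simp
    have "sig a (r, c) < cnt a Y (Y (r, c))" using LSSF_char[OF Y Bd, of "Y (r, c)"] by simp
    then have "sig a (r, c) < cnt a X (Y (r, c))" using cc[OF LSSF_le_n[OF Y B]] rc by simp
    then show ?thesis using LSSF_char[OF X Bd] rc by simp
  qed
  show "T = T'"
  proof
    fix B show "T B = T' B"
    proof (cases "B \<in> diag a")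
      case True
      have c': "cnt a T' v = cnt a T v" if "v \<le> length a" for v using c[OF that] by simp
      show ?thesis using le[OF T T' True c] le[OF T' T True c'] by (rule antisym)
    next
      case False
      have "T B = 0" using LSSF_D(1)[OF T, rule_format, OF False] .
      moreover have "T' B = 0" using LSSF_D(1)[OF T', rule_format, OF False] .
      ultimately show ?thesis by simp
    qed
  qed
qed

definition G :: "nat list \<Rightarrow> nat list \<Rightarrow> nat \<times> nat \<Rightarrow> nat" where
  "G a b B = (if B \<in> diag a then (LEAST v. sig a B < P b v) else 0)"

lemma S_row:
  assumes b: "b \<in> S a" and rc: "(r, c) \<in> diag a"
  shows "P b r = P a r" "1 \<le> b ! (r - 1)"
proof -
  have q: "r - 1 < length a" "a ! (r - 1) \<noteq> 0" "Suc (r - 1) = r" using rc by (auto simp: diag_iff)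
  have H: "\<forall>q<length a. a ! q \<noteq> 0 \<longrightarrow> 1 \<le> b ! q \<and> P b (Suc q) = P a (Suc q)"
    using b by (simp add: S_def)
  then have "1 \<le> b ! (r - 1) \<and> P b (Suc (r - 1)) = P a (Suc (r - 1))" using q(1,2) by blast
  then show "P b r = P a r" "1 \<le> b ! (r - 1)" using q(3) by simp_all
qed

lemma G_char:
  assumes b: "b \<in> S a" and rc: "(r, c) \<in> diag a"
  shows "G a b (r, c) \<le> v \<longleftrightarrow> sig a (r, c) < P b v"
proof -
  have ex: "sig a (r, c) < P b r" using sig_int[OF rc] S_row(1)[OF b rc] by simp
  define L where "L = (LEAST v. sig a (r, c) < P b v)"
  have GL: "G a b (r, c) = L" using rc by (simp add: G_def L_def)
  have L1: "sig a (r, c) < P b L" unfolding L_def using ex by (rule LeastI)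
  show ?thesis
  proof
    assume "G a b (r, c) \<le> v"
    then have "P b L \<le> P b v" using GL by (simp add: P_mono)
    then show "sig a (r, c) < P b v" using L1 by simp
  next
    assume "sig a (r, c) < P b v"
    then have "L \<le> v" unfolding L_def by (rule Least_le)
    then show "G a b (r, c) \<le> v" using GL by simp
  qed
qed

lemma skyline_intro:
  assumes pos: "\<forall>B\<in>diag a. T B > 0"
    and rs: "\<And>r c. (r, c) \<in> diag a \<Longrightarrow> (r, Suc c) \<in> diag a \<Longrightarrow> T (r, Suc c) \<le> T (r, c)"
    and st: "\<And>r c s d. (r, c) \<in> diag a \<Longrightarrow> (s, d) \<in> diag a \<Longrightarrow> s < r \<Longrightarrow> T (s, d) < T (r, c)"
  shows "semi_skyline a T"
  unfolding semi_skyline_def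
proof (intro conjI allI impI pos)
  fix r c assume "(r, c) \<in> diag a \<and> (r, Suc c) \<in> diag a"
  then show "T (r, Suc c) \<le> T (r, c)" using rs by blast
next
  fix r s c assume h: "(r, c) \<in> diag a \<and> (s, c) \<in> diag a \<and> r \<noteq> s"
  show "T (r, c) \<noteq> T (s, c)"
  proof (cases "r < s")
    case True then show ?thesis using st[of s c r c] h by auto
  next
    case False then have "s < r" using h by auto
    then show ?thesis using st[of r c s c] h by auto
  qed
next
  fix r s c assume h: "r < s \<and> row_len a s \<le> row_len a r \<and> (r, c) \<in> diag a \<and> (r, Suc c) \<in> diag a \<and> (s, Suc c) \<in> diag a"
  have "T (r, c) < T (s, Suc c)" using st[of s "Suc c" r c] h by auto
  moreover have "T (r, Suc c) \<le> T (r, c)" using rs h by auto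
  ultimately show "inversion_triple (T (r, c)) (T (r, Suc c)) (T (s, Suc c))"
    by (simp add: inversion_triple_def)
next
  fix r s c assume h: "r < s \<and> row_len a r < row_len a s \<and> (s, c) \<in> diag a \<and> (s, Suc c) \<in> diag a \<and> (r, c) \<in> diag a"
  have "T (r, c) < T (s, Suc c)" using st[of s "Suc c" r c] h by auto
  moreover have "T (s, Suc c) \<le> T (s, c)" using rs h by auto
  ultimately show "inversion_triple (T (s, c)) (T (s, Suc c)) (T (r, c))"
    by (simp add: inversion_triple_def)
qed

lemma G_in:
  assumes b: "b \<in> S a"
  shows "G a b \<in> LSSF a"
proof -
  have pos: "\<forall>B\<in>diag a. G a b B > 0"
  proof
    fix B assume B: "B \<in> diag a"
    obtain r c where rc: "B = (r, c)" by (cases B)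
    have "\<not> G a b (r, c) \<le> 0" using G_char[OF b, of r c 0] B rc by simp
    then show "G a b B > 0" using rc by simp
  qed
  have rs: "G a b (r, Suc c) \<le> G a b (r, c)" if "(r, c) \<in> diag a" "(r, Suc c) \<in> diag a" for r c
  proof -
    have "sig a (r, c) < P b (G a b (r, c))" using G_char[OF b that(1), of "G a b (r, c)"] by simp
    moreover have "sig a (r, Suc c) < sig a (r, c)" using sig_ord[OF that(2) that(1)] by simp
    ultimately show ?thesis using G_char[OF b that(2)] by simp
  qed
  have le_row: "G a b (s, d) \<le> s" if "(s, d) \<in> diag a" for s d
    using G_char[OF b that, of s] sig_int[OF that] S_row(1)[OF b that] by simp
  have st: "G a b (s, d) < G a b (r, c)" if "(r, c) \<in> diag a" "(s, d) \<in> diag a" "s < r" for r c s d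
  proof -
    have "\<not> G a b (r, c) \<le> s"
    proof
      assume "G a b (r, c) \<le> s"
      then have "sig a (r, c) < P b s" using G_char[OF b that(1)] by simp
      moreover have "P b s = P a s" using S_row(1)[OF b that(2)] .
      moreover have "P a s \<le> P a (r - 1)" using that(3) by (intro P_mono) simp
      moreover have "P a (r - 1) \<le> sig a (r, c)" using sig_int[OF that(1)] by simp
      ultimately show False by simp
    qed
    then show ?thesis using le_row[OF that(2)] by simp
  qed
  have first: "G a b (r, 1) = r" if r1: "(r, 1) \<in> diag a" for r
  proof -
    have "G a b (r, 1) \<le> r" using le_row[OF r1] .
    moreover have "\<not> G a b (r, 1) \<le> r - 1"
    proof
      assume "G a b (r, 1) \<le> r - 1"
      then have "sig a (r, 1) < P b (r - 1)" using G_char[OF b r1] by simp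
      moreover have "P b r = P b (r - 1) + b ! (r - 1)" using r1 by (intro P_row) (simp add: diag_iff)
      moreover have "P b r = P a r" "1 \<le> b ! (r - 1)" using S_row[OF b r1] by auto
      moreover have "sig a (r, 1) = P a r - 1" by (simp add: sig_def)
      ultimately show False by simp
    qed
    ultimately show ?thesis by simp
  qed
  have sky: "semi_skyline a (G a b)" using skyline_intro[OF pos rs st] by blast
  show ?thesis unfolding LSSF_def
    using sky first st by (auto simp: G_def)
qed

lemma hh_G:
  assumes b: "b \<in> S a"
  shows "hh a (G a b) = b"
proof -
  have len: "length b = length a" using b by (simp add: S_def)
  have pos: "\<forall>B\<in>diag a. G a b B > 0" using LSSF_D(2)[OF G_in[OF b]] .
  have cntG: "cnt a (G a b) v = P b v" if v: "v \<le> length a" for v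
  proof -
    have "{B \<in> diag a. G a b B \<le> v} = {B \<in> diag a. sig a B < P b v}"
    proof (intro Collect_cong conj_cong refl)
      fix B assume B: "B \<in> diag a"
      obtain r c where rc: "B = (r, c)" by (cases B)
      show "(G a b B \<le> v) = (sig a B < P b v)" using G_char[OF b, of r c v] B rc by simp
    qed
    moreover have "P b v \<le> P a (length a)" using P_mono[OF v, of b] b by (simp add: S_def)
    ultimately show ?thesis using card_sig_lt[of a "P b v"] by (simp add: cnt_def)
  qed
  show ?thesis
  proof (rule nth_equalityI)
    show "length (hh a (G a b)) = length b" using len by (simp add: hh_def)
    fix p assume "p < length (hh a (G a b))"
    then have p: "p < length a" by (simp add: hh_def)
    have "P (hh a (G a b)) (Suc p) = P (hh a (G a b)) p + hh a (G a b) ! p" by (simp add: P_Suc)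
    moreover have "P (hh a (G a b)) (Suc p) = P b (Suc p)" using P_hh[OF pos, of "Suc p"] cntG[of "Suc p"] p by simp
    moreover have "P (hh a (G a b)) p = P b p" using P_hh[OF pos, of p] cntG[of p] p by simp
    ultimately show "hh a (G a b) ! p = b ! p" by (simp add: P_Suc)
  qed
qed

lemma card_filter_sum:
  assumes "finite A"
  shows "(\<Sum>x\<in>A. (1::nat) when f x = k) = card {x \<in> A. f x = k}"
proof -
  have eq: "(\<lambda>x. (1::nat) when f x = k) = (\<lambda>x. if f x = k then 1 else 0)"
    by (auto simp: when_def fun_eq_iff)
  show ?thesis unfolding eq using sum.inter_filter[OF assms, of "\<lambda>_. (1::nat)" "\<lambda>x. f x = k"] by simp
qed

lemma wt_hh:
  assumes T: "T \<in> LSSF a"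
  shows "wt a T = Defs.mono (hh a T)"
proof (rule poly_mapping_eqI)
  fix k
  have "Poly_Mapping.lookup (wt a T) k = (\<Sum>B\<in>diag a. Poly_Mapping.lookup (Poly_Mapping.single (T B) (1::nat)) k)"
    unfolding wt_def by (rule lookup_sum)
  also have "\<dots> = (\<Sum>B\<in>diag a. (1::nat) when T B = k)" by (simp only: lookup_single)
  also have "\<dots> = card {B \<in> diag a. T B = k}" by (rule card_filter_sum[OF finite_diag])
  finally have l1: "Poly_Mapping.lookup (wt a T) k = card {B \<in> diag a. T B = k}" .
  have l2: "Poly_Mapping.lookup (Defs.mono (hh a T)) k = (\<Sum>p<length a. (hh a T ! p) when Suc p = k)"
    unfolding Defs.mono_def lookup_sum lookup_single by (simp add: hh_def)
  show "Poly_Mapping.lookup (wt a T) k = Poly_Mapping.lookup (Defs.mono (hh a T)) k"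
  proof (cases k)
    case 0
    have e: "{B \<in> diag a. T B = k} = {}" using LSSF_D(2)[OF T] 0 by auto
    have "Poly_Mapping.lookup (wt a T) k = 0" unfolding l1 e by simp
    moreover have "Poly_Mapping.lookup (Defs.mono (hh a T)) k = 0" unfolding l2 using 0 by (simp add: when_def)
    ultimately show ?thesis by simp
  next
    case (Suc m)
    have "(\<Sum>p<length a. (hh a T ! p) when Suc p = k) = (\<Sum>p<length a. if p = m then hh a T ! p else 0)"
      using Suc by (intro sum.cong) (auto simp: when_def)
    also have "\<dots> = (if m < length a then hh a T ! m else 0)" by (simp add: sum.delta')
    finally have l3: "Poly_Mapping.lookup (Defs.mono (hh a T)) k = (if m < length a then hh a T ! m else 0)" using l2 by simp
    show ?thesis
    proof (cases "m < length a")
      case True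
      then show ?thesis using l1 l3 Suc by (simp add: hh_def)
    next
      case False
      have "\<forall>B\<in>diag a. T B \<noteq> k" using LSSF_le_n[OF T] Suc False by (metis Suc_le_eq not_less)
      then have e: "{B \<in> diag a. T B = k} = {}" by blast
      show ?thesis unfolding l1 l3 e using False by simp
    qed
  qed
qed

theorem proposition4p11:
  fixes a :: "nat list"
  shows "frakL a = (\<Sum>T\<in>LSSF a. Poly_Mapping.single (wt a T) (1::int))"
proof -
  have im: "hh a ` LSSF a = fixed_slides a"
  proof
    show "hh a ` LSSF a \<subseteq> fixed_slides a" using hh_in_S fs_eq_S by blast
    show "fixed_slides a \<subseteq> hh a ` LSSF a"
    proof
      fix b assume "b \<in> fixed_slides a"
      then have b: "b \<in> S a" using fs_eq_S by blast
      show "b \<in> hh a ` LSSF a" using imageI[OF G_in[OF b], of "hh a"] hh_G[OF b] by simp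
    qed
  qed
  have "frakL a = (\<Sum>b\<in>hh a ` LSSF a. Poly_Mapping.single (Defs.mono b) 1)"
    unfolding frakL_def im ..
  also have "\<dots> = (\<Sum>T\<in>LSSF a. Poly_Mapping.single (Defs.mono (hh a T)) 1)"
    by (rule sum.reindex[OF hh_inj, unfolded comp_def])
  also have "\<dots> = (\<Sum>T\<in>LSSF a. Poly_Mapping.single (wt a T) (1::int))"
    by (intro sum.cong refl) (simp add: wt_hh)
  finally show ?thesis .
qed

end
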